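(* Each (s)-set is the union of countably many DC graphs.
   Context: A function on an open interval is DC if it is the difference of two convex functions. A function defined on a nonempty set $D\subset\mathbb{R}$ is DCR if it is the restriction of a DC function defined on $\mathbb{R}$. A nonempty closed set $S\subset\mathbb{R}^2$ is an (s)-set if there exists $r>0$ such that (a) $S\subset\bigcup_{i=1}^k\operatorname{graph} f_i$ for some DCR functions $f_i:[0,r]\to\mathbb{R}$ with $f_i(0)=(f_i)'_+(0)=0$, and (b) $S=\bigcup_{h\in H}\operatorname{graph} h$ for some family $H$ of continuous functions on $[0,r]$. A set $P\subset\mathbb{R}^2$ is a DC graph if it is a rotated copy (rotation around the origin) of $\operatorname{graph} f$ for a DCR function $f$ on some nonempty compact (possibly degenerate) interval $I\subset\mathbb{R}$. *)

theory Defs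
  imports "HOL-Analysis.Analysis"
begin

definition DC_on :: "real set \<Rightarrow> (real \<Rightarrow> real) \<Rightarrow> bool" where
  "DC_on I f \<longleftrightarrow> (\<exists>g h. convex_on I g \<and> convex_on I h \<and> (\<forall>x\<in>I. f x = g x - h x))"

definition DCR :: "real set \<Rightarrow> (real \<Rightarrow> real) \<Rightarrow> bool" where
  "DCR D f \<longleftrightarrow> D \<noteq> {} \<and> (\<exists>g. DC_on UNIV g \<and> (\<forall>x\<in>D. f x = g x))"

definition graph_on :: "real set \<Rightarrow> (real \<Rightarrow> real) \<Rightarrow> (real \<times> real) set" where
  "graph_on D f = {(x, f x) | x. x \<in> D}"

definition rot :: "real \<Rightarrow> real \<times> real \<Rightarrow> real \<times> real" where
  "rot t p = (cos t * fst p - sin t * snd p, sin t * fst p + cos t * snd p)"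

definition s_set :: "(real \<times> real) set \<Rightarrow> bool" where
  "s_set S \<longleftrightarrow> S \<noteq> {} \<and> closed S \<and>
    (\<exists>r>0.
      (\<exists>F. finite F \<and>
          (\<forall>f\<in>F. DCR {0..r} f \<and> f 0 = 0 \<and> (f has_real_derivative 0) (at 0 within {0..r})) \<and>
          S \<subseteq> (\<Union>f\<in>F. graph_on {0..r} f)) \<and>
      (\<exists>H. (\<forall>h\<in>H. continuous_on {0..r} h) \<and> S = (\<Union>h\<in>H. graph_on {0..r} h)))"

definition DC_graph :: "(real \<times> real) set \<Rightarrow> bool" where
  "DC_graph P \<longleftrightarrow> (\<exists>t f a b. a \<le> b \<and> DCR {a..b} f \<and> P = rot t ` graph_on {a..b} f)"

end

theory Submission
  imports Defs
begin

definition d2 :: "(real \<Rightarrow> real) \<Rightarrow> real \<Rightarrow> real \<Rightarrow> real" where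
  "d2 \<phi> x t = \<phi> (x + t) + \<phi> (x - t) - 2 * \<phi> x"

lemma convex_d2:
  assumes "convex_on UNIV \<phi>"
  shows "0 \<le> d2 \<phi> x t"
proof -
  have "\<phi> ((1 - 1/2) *\<^sub>R (x + t) + (1/2) *\<^sub>R (x - t)) \<le> (1 - 1/2) * \<phi> (x + t) + (1/2) * \<phi> (x - t)"
    by (rule convex_onD[OF assms]) auto
  moreover have "(1 - 1/2) *\<^sub>R (x + t) + (1/2) *\<^sub>R (x - t) = x" by (simp add: field_simps)
  ultimately show ?thesis unfolding d2_def by simp
qed

lemma convex_on_max2:
  assumes "convex_on S f" "convex_on S g"
  shows "convex_on S (\<lambda>x. max (f x) (g x))"
  using assms unfolding convex_on_def
proof (intro conjI ballI allI impI, goal_cases)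
  case 1 then show ?case by simp
next
  case (2 x y u v)
  have a: "f (u *\<^sub>R x + v *\<^sub>R y) \<le> u * f x + v * f y" using 2 by blast
  have b: "g (u *\<^sub>R x + v *\<^sub>R y) \<le> u * g x + v * g y" using 2 by blast
  have "u * f x + v * f y \<le> u * max (f x) (g x) + v * max (f y) (g y)"
    using 2 by (intro add_mono mult_left_mono) auto
  moreover have "u * g x + v * g y \<le> u * max (f x) (g x) + v * max (f y) (g y)"
    using 2 by (intro add_mono mult_left_mono) auto
  ultimately show ?case using a b by simp
qed

lemma convex_on_sum_fun:
  assumes "finite I" "\<forall>i\<in>I. convex_on UNIV (f i)"
  shows "convex_on UNIV (\<lambda>x. \<Sum>i\<in>I. f i x)"
  using assms
proof (induction I rule: finite_induct)
  case empty then show ?case by (simp add: convex_on_const)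
next
  case (insert a I)
  then show ?case by (simp add: convex_on_add)
qed

lemma d2_sum: "d2 (\<lambda>x. \<Sum>i\<in>I. f i x) x t = (\<Sum>i\<in>I. d2 (f i) x t)"
  unfolding d2_def by (simp add: sum.distrib sum_subtractf sum_distrib_left)

lemma d2_add: "d2 (\<lambda>x. f x + g x) x t = d2 f x t + d2 g x t"
  unfolding d2_def by simp

lemma d2_cmul: "d2 (\<lambda>x. c * f x) x t = c * d2 f x t"
  unfolding d2_def by (simp add: algebra_simps)

lemma local_convex:
  fixes \<psi> :: "real \<Rightarrow> real"
  assumes cont: "continuous_on UNIV \<psi>"
    and loc: "\<And>x. \<exists>\<delta>>0. \<forall>t. 0 < t \<and> t < \<delta> \<longrightarrow> 2 * \<psi> x \<le> \<psi> (x - t) + \<psi> (x + t)"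
  shows "convex_on UNIV \<psi>"
proof (rule convex_on_linorderI)
  show "convex (UNIV :: real set)" by simp
  fix u a b :: real
  assume u: "0 < u" "u < 1" and ab: "a < b"
  define k where "k = (\<psi> b - \<psi> a) / (b - a)"
  define L where "L y = \<psi> a + (y - a) * k" for y
  define \<phi> where "\<phi> y = \<psi> y - L y" for y
  have Laff: "L (y - t) + L (y + t) = 2 * L y" for y t
    unfolding L_def by (simp add: algebra_simps)
  have contL: "continuous_on UNIV L" unfolding L_def by (intro continuous_intros)
  have cphi: "continuous_on {a..b} \<phi>" unfolding \<phi>_def
    by (intro continuous_on_diff continuous_on_subset[OF cont] continuous_on_subset[OF contL]) auto
  obtain xm where xm: "xm \<in> {a..b}" "\<forall>y\<in>{a..b}. \<phi> y \<le> \<phi> xm"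
    using continuous_attains_sup[OF compact_Icc _ cphi] ab by auto
  define m where "m = \<phi> xm"
  define M where "M = {y \<in> {a..b}. \<phi> y = m}"
  have "closed M" unfolding M_def
    by (rule continuous_closed_preimage_constant[OF cphi closed_atLeastAtMost])
  moreover have "bounded M" unfolding M_def by (rule bounded_subset[OF bounded_closed_interval]) auto
  ultimately have "compact M" using compact_eq_bounded_closed by blast
  moreover have "M \<noteq> {}" using xm unfolding M_def m_def by auto
  ultimately obtain x0 where x0: "x0 \<in> M" "\<forall>y\<in>M. x0 \<le> y"
    using continuous_attains_inf[of M "\<lambda>x. x"] by (auto intro: continuous_on_id)
  define z where "z = (1 - u) *\<^sub>R a + u *\<^sub>R b"
  have z2: "z = a + u * (b - a)" by (simp add: z_def algebra_simps)
  have "u * (b - a) \<le> 1 * (b - a)" using u ab by (intro mult_right_mono) auto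
  moreover have "0 \<le> u * (b - a)" using u ab by simp
  ultimately have zab: "z \<in> {a..b}" using z2 by auto
  have Lz: "L z = (1 - u) * \<psi> a + u * \<psi> b"
    unfolding L_def z_def k_def using ab by (simp add: field_simps)
  show "\<psi> ((1 - u) *\<^sub>R a + u *\<^sub>R b) \<le> (1 - u) * \<psi> a + u * \<psi> b"
  proof (rule ccontr)
    assume "\<not> ?thesis"
    then have "\<phi> z > 0" unfolding \<phi>_def using Lz z_def by simp
    then have mpos: "m > 0" using xm zab unfolding m_def by force
    have "\<phi> a = 0" "\<phi> b = 0" unfolding \<phi>_def L_def k_def using ab by auto
    have phix0: "\<phi> x0 = m" and x0ab: "x0 \<in> {a..b}" using x0 unfolding M_def by auto
    have "x0 \<noteq> a" "x0 \<noteq> b" using phix0 mpos \<open>\<phi> a = 0\<close> \<open>\<phi> b = 0\<close> by auto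
    then have x0in: "a < x0" "x0 < b" using x0ab by auto
    obtain \<delta> where d: "\<delta> > 0" "\<forall>t. 0 < t \<and> t < \<delta> \<longrightarrow> 2 * \<psi> x0 \<le> \<psi> (x0 - t) + \<psi> (x0 + t)"
      using loc by blast
    define t where "t = min \<delta> (min (x0 - a) (b - x0)) / 2"
    have t1: "0 < t" "2*t \<le> \<delta>" "2*t \<le> (x0 - a)" "2*t \<le> (b - x0)"
      unfolding t_def using d x0in by (auto simp: min_def)
    have t: "0 < t" "t < \<delta>" "a \<le> x0 - t" "x0 + t \<le> b"
      subgoal using t1 by linarith
      subgoal using t1 d by linarith
      subgoal using t1 x0in by linarith
      subgoal using t1 x0in by linarith
      done
    have "\<phi> (x0 - t) \<le> m" "\<phi> (x0 + t) \<le> m" using xm t x0in unfolding m_def by auto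
    moreover have "\<phi> (x0 - t) \<noteq> m"
    proof
      assume "\<phi> (x0 - t) = m"
      then have "x0 - t \<in> M" unfolding M_def using t x0in by auto
      then show False using x0(2) t by fastforce
    qed
    ultimately have "\<phi> (x0 - t) + \<phi> (x0 + t) < 2 * m" by linarith
    moreover have "2 * \<phi> x0 \<le> \<phi> (x0 - t) + \<phi> (x0 + t)"
      using d(2) t Laff[of x0 t] unfolding \<phi>_def by force
    ultimately show False using phix0 by linarith
  qed
qed

lemma DC_cont:
  assumes "DC_on UNIV g"
  shows "continuous_on UNIV g"
proof -
  obtain A B where AB: "convex_on UNIV A" "convex_on UNIV B" "\<forall>x. g x = A x - B x"
    using assms unfolding DC_on_def by auto
  have "continuous_on UNIV (\<lambda>x. A x - B x)"
    using AB by (intro continuous_on_diff convex_on_continuous) auto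
  moreover have "g = (\<lambda>x. A x - B x)" using AB by auto
  ultimately show ?thesis by simp
qed

lemma selection_DC:
  fixes G :: "(real \<Rightarrow> real) set" and h :: "real \<Rightarrow> real"
  assumes fin: "finite G" and dc: "\<forall>g\<in>G. DC_on UNIV g"
    and hc: "continuous_on UNIV h" and hs: "\<forall>x. \<exists>g\<in>G. h x = g x"
  shows "DC_on UNIV h"
proof -
  have "\<forall>g\<in>G. \<exists>P. convex_on UNIV (fst P) \<and> convex_on UNIV (snd P) \<and> (\<forall>x. g x = fst P x - snd P x)"
    using dc unfolding DC_on_def by force
  then obtain P where P: "\<forall>g\<in>G. convex_on UNIV (fst (P g)) \<and> convex_on UNIV (snd (P g)) \<and> (\<forall>x. g x = fst (P g) x - snd (P g) x)"
    by (metis bchoice)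
  define A where "A g = fst (P g)" for g
  define B where "B g = snd (P g)" for g
  have cA: "g \<in> G \<Longrightarrow> convex_on UNIV (A g)" for g using P A_def by auto
  have cB: "g \<in> G \<Longrightarrow> convex_on UNIV (B g)" for g using P B_def by auto
  have gAB: "g \<in> G \<Longrightarrow> g x = A g x - B g x" for g x using P A_def B_def by auto
  define U where "U p q x = A q x + B p x" for p q x
  define V where "V p q x = A p x + B q x" for p q x
  define M where "M p q x = 2 * max (U p q x) (V p q x)" for p q x
  have cU: "p \<in> G \<Longrightarrow> q \<in> G \<Longrightarrow> convex_on UNIV (U p q)" for p q
    unfolding U_def using cA cB by (intro convex_on_add) auto
  have cV: "p \<in> G \<Longrightarrow> q \<in> G \<Longrightarrow> convex_on UNIV (V p q)" for p q
    unfolding V_def using cA cB by (intro convex_on_add) auto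
  have cM: "p \<in> G \<Longrightarrow> q \<in> G \<Longrightarrow> convex_on UNIV (M p q)" for p q
    unfolding M_def using cU cV by (intro convex_on_cmul convex_on_max2) auto
  define C where "C x = (\<Sum>g\<in>G. A g x + B g x) + (\<Sum>p\<in>G. \<Sum>q\<in>G. M p q x)" for x
  have cC1: "convex_on UNIV (\<lambda>x. \<Sum>g\<in>G. A g x + B g x)"
    using fin cA cB by (intro convex_on_sum_fun convex_on_add ballI) auto
  have cC2: "convex_on UNIV (\<lambda>x. \<Sum>p\<in>G. \<Sum>q\<in>G. M p q x)"
    using fin cM by (intro convex_on_sum_fun ballI) auto
  have cC: "convex_on UNIV C" unfolding C_def using cC1 cC2 by (rule convex_on_add)
  have contC: "continuous_on UNIV C" using cC by (intro convex_on_continuous) auto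
  have d2C: "d2 C x t = (\<Sum>g\<in>G. d2 (A g) x t + d2 (B g) x t) + (\<Sum>p\<in>G. \<Sum>q\<in>G. d2 (M p q) x t)" for x t
    unfolding C_def d2_add d2_sum by simp
  have key: "\<exists>\<delta>>0. \<forall>t. 0 < t \<and> t < \<delta> \<longrightarrow> \<bar>d2 h x t\<bar> \<le> d2 C x t" for x
  proof -
    have "\<forall>\<^sub>F y in at x. \<forall>g\<in>G. g x \<noteq> h x \<longrightarrow> g y \<noteq> h y"
    proof (rule eventually_ball_finite[OF fin], rule ballI)
      fix g assume gG: "g \<in> G"
      show "\<forall>\<^sub>F y in at x. g x \<noteq> h x \<longrightarrow> g y \<noteq> h y"
      proof (cases "g x = h x")
        case True then show ?thesis by simp
      next
        case False
        have "continuous_on UNIV (\<lambda>y. g y - h y)"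
          using DC_cont dc gG hc by (intro continuous_on_diff) auto
        then have "((\<lambda>y. g y - h y) \<longlongrightarrow> g x - h x) (at x)"
          by (simp add: continuous_on_def)
        moreover have "g x - h x \<noteq> 0" using False by simp
        ultimately have "\<forall>\<^sub>F y in at x. g y - h y \<noteq> 0"
          by (rule tendsto_imp_eventually_ne)
        then show ?thesis by (rule eventually_mono) auto
      qed
    qed
    then obtain \<delta> where d: "\<delta> > 0" "\<forall>y. y \<noteq> x \<and> dist y x < \<delta> \<longrightarrow> (\<forall>g\<in>G. g x \<noteq> h x \<longrightarrow> g y \<noteq> h y)"
      unfolding eventually_at by auto
    show ?thesis
    proof (intro exI conjI allI impI)
      show "\<delta> > 0" by fact
      fix t assume t: "0 < t \<and> t < \<delta>"
      obtain q where q: "q \<in> G" "h (x + t) = q (x + t)" using hs by blast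
      obtain p where p: "p \<in> G" "h (x - t) = p (x - t)" using hs by blast
      have "dist (x + t) x < \<delta>" "x + t \<noteq> x" "dist (x - t) x < \<delta>" "x - t \<noteq> x"
        using t by (auto simp: dist_real_def)
      then have qx: "q x = h x" and px: "p x = h x" using d q p by metis+
      have e1: "d2 h x t = (q (x + t) - p (x + t)) + d2 p x t"
        unfolding d2_def using q p px by simp
      have e2: "d2 p x t = d2 (A p) x t - d2 (B p) x t"
        unfolding d2_def using gAB[OF p(1), of "x+t"] gAB[OF p(1), of "x-t"] gAB[OF p(1), of x] by linarith
      have nA: "0 \<le> d2 (A p) x t" "0 \<le> d2 (B p) x t" using convex_d2 cA cB p by auto
      have nU: "0 \<le> d2 (U p q) x t" "0 \<le> d2 (V p q) x t" using convex_d2 cU cV p q by auto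
      have UV: "U p q y - V p q y = q y - p y" for y
        unfolding U_def V_def using gAB[OF p(1), of y] gAB[OF q(1), of y] by linarith
      have UVx: "U p q x = V p q x" using UV[of x] qx px by simp
      have e3: "\<bar>q (x + t) - p (x + t)\<bar> \<le> d2 (M p q) x t"
      proof -
        have "\<bar>q (x + t) - p (x + t)\<bar> = M p q (x + t) - U p q (x + t) - V p q (x + t)"
          unfolding M_def using UV[of "x + t"] by (simp add: max_def abs_if)
        moreover have "M p q (x - t) \<ge> U p q (x - t) + V p q (x - t)"
          unfolding M_def by (simp add: max_def)
        moreover have "M p q x = U p q x + V p q x" unfolding M_def using UVx by simp
        ultimately show ?thesis using nU unfolding d2_def by linarith
      qed
      have e4: "d2 (A p) x t + d2 (B p) x t \<le> (\<Sum>g\<in>G. d2 (A g) x t + d2 (B g) x t)"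
        using fin p(1) convex_d2 cA cB by (intro member_le_sum) (auto intro: add_nonneg_nonneg)
      have e5: "d2 (M p q) x t \<le> (\<Sum>q'\<in>G. d2 (M p q') x t)"
        using fin q(1) convex_d2 cM p(1) by (intro member_le_sum) auto
      have e6: "(\<Sum>q'\<in>G. d2 (M p q') x t) \<le> (\<Sum>p'\<in>G. \<Sum>q'\<in>G. d2 (M p' q') x t)"
        using fin p(1) convex_d2 cM by (intro member_le_sum sum_nonneg) auto
      show "\<bar>d2 h x t\<bar> \<le> d2 C x t"
        using e1 e2 e3 e4 e5 e6 nA d2C[of x t] by linarith
    qed
  qed
  define g1 where "g1 x = C x + h x" for x
  define g2 where "g2 x = C x - h x" for x
  have "convex_on UNIV g1"
  proof (rule local_convex)
    show "continuous_on UNIV g1" unfolding g1_def using contC hc by (intro continuous_on_add)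
    fix x
    obtain \<delta> where "\<delta> > 0" "\<forall>t. 0 < t \<and> t < \<delta> \<longrightarrow> \<bar>d2 h x t\<bar> \<le> d2 C x t" using key by blast
    then show "\<exists>\<delta>>0. \<forall>t. 0 < t \<and> t < \<delta> \<longrightarrow> 2 * g1 x \<le> g1 (x - t) + g1 (x + t)"
      unfolding g1_def d2_def by (intro exI[of _ \<delta>]) force
  qed
  moreover have "convex_on UNIV g2"
  proof (rule local_convex)
    show "continuous_on UNIV g2" unfolding g2_def using contC hc by (intro continuous_on_diff)
    fix x
    obtain \<delta> where "\<delta> > 0" "\<forall>t. 0 < t \<and> t < \<delta> \<longrightarrow> \<bar>d2 h x t\<bar> \<le> d2 C x t" using key by blast
    then show "\<exists>\<delta>>0. \<forall>t. 0 < t \<and> t < \<delta> \<longrightarrow> 2 * g2 x \<le> g2 (x - t) + g2 (x + t)"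
      unfolding g2_def d2_def by (intro exI[of _ \<delta>]) force
  qed
  ultimately have "convex_on UNIV (\<lambda>x. (1/2) * g1 x)" "convex_on UNIV (\<lambda>x. (1/2) * g2 x)"
    by (auto intro: convex_on_cmul)
  moreover have "\<forall>x\<in>UNIV. h x = (1/2) * g1 x - (1/2) * g2 x" unfolding g1_def g2_def by (simp add: field_simps)
  ultimately show ?thesis unfolding DC_on_def by blast
qed

lemma DC_const: "DC_on UNIV (\<lambda>y. a)"
  unfolding DC_on_def by (intro exI[of _ "\<lambda>y. a"] exI[of _ "\<lambda>y. 0"]) (auto simp: convex_on_const)

lemma selection_DCR:
  fixes G :: "(real \<Rightarrow> real) set" and h :: "real \<Rightarrow> real"
  assumes r: "0 \<le> r" and fin: "finite G" and dc: "\<forall>g\<in>G. DC_on UNIV g"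
    and hc: "continuous_on {0..r} h" and hs: "\<forall>x\<in>{0..r}. \<exists>g\<in>G. h x = g x"
  shows "DCR {0..r} h"
proof -
  define c where "c y = max 0 (min r y)" for y :: real
  define hh where "hh y = h (c y)" for y
  have cc: "continuous_on UNIV c" unfolding c_def by (intro continuous_intros)
  have cr: "c ` UNIV \<subseteq> {0..r}" using r by (auto simp: c_def)
  have hhc: "continuous_on UNIV hh" unfolding hh_def
    using continuous_on_compose[OF cc continuous_on_subset[OF hc cr]] by (simp add: o_def)
  define G' where "G' = insert (\<lambda>y. h 0) (insert (\<lambda>y. h r) G)"
  have "DC_on UNIV hh"
  proof (rule selection_DC[of G'])
    show "finite G'" using fin unfolding G'_def by simp
    show "\<forall>g\<in>G'. DC_on UNIV g" using dc DC_const unfolding G'_def by auto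
    show "continuous_on UNIV hh" by fact
    show "\<forall>x. \<exists>g\<in>G'. hh x = g x"
    proof
      fix x :: real
      consider "x < 0" | "x > r" | "x \<in> {0..r}" by force
      then show "\<exists>g\<in>G'. hh x = g x"
      proof cases
        case 1 then have "c x = 0" using r by (simp add: c_def)
        then show ?thesis unfolding G'_def hh_def by auto
      next
        case 2 then have "c x = r" using r by (simp add: c_def)
        then show ?thesis unfolding G'_def hh_def by auto
      next
        case 3 then have "c x = x" by (simp add: c_def)
        then show ?thesis using hs 3 unfolding G'_def hh_def by auto
      qed
    qed
  qed
  moreover have "\<forall>x\<in>{0..r}. h x = hh x" unfolding hh_def c_def by simp
  ultimately show ?thesis unfolding DCR_def using r by auto
qed

lemma rot0: "rot 0 ` X = X"
proof -
  have "rot 0 = (\<lambda>p. p)" by (auto simp: rot_def fun_eq_iff)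
  then show ?thesis by simp
qed

theorem corollary5p4:
  fixes S :: "(real \<times> real) set"
  assumes "s_set S"
  shows "\<exists>\<P>. countable \<P> \<and> (\<forall>P\<in>\<P>. DC_graph P) \<and> S = \<Union>\<P>"
proof -
  from assms obtain r F H where r: "r > 0" and Ffin: "finite F"
    and Fp: "\<forall>f\<in>F. DCR {0..r} f" and Ssub: "S \<subseteq> (\<Union>f\<in>F. graph_on {0..r} f)"
    and Hc: "\<forall>h\<in>H. continuous_on {0..r} h" and SH: "S = (\<Union>h\<in>H. graph_on {0..r} h)"
    unfolding s_set_def by blast
  have "\<forall>f\<in>F. \<exists>g. DC_on UNIV g \<and> (\<forall>x\<in>{0..r}. f x = g x)" using Fp unfolding DCR_def by blast
  then obtain E where E: "\<forall>f\<in>F. DC_on UNIV (E f) \<and> (\<forall>x\<in>{0..r}. f x = E f x)" by metis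
  have Econt: "f \<in> F \<Longrightarrow> continuous_on UNIV (E f)" for f using E DC_cont by blast
  have inS: "(x, y) \<in> S \<Longrightarrow> x \<in> {0..r} \<and> (\<exists>f\<in>F. y = f x \<and> y = E f x)" for x y
    using Ssub E unfolding graph_on_def by fastforce
  have graphS: "h \<in> H \<Longrightarrow> x \<in> {0..r} \<Longrightarrow> (x, h x) \<in> S" for h x
    unfolding SH graph_on_def by blast
  have sel: "h \<in> H \<Longrightarrow> x \<in> {0..r} \<Longrightarrow> \<exists>f\<in>F. h x = E f x" for h x
    using inS[OF graphS] by blast
  have dcr: "h \<in> H \<Longrightarrow> DCR {0..r} h" for h
    using r Ffin E Hc sel by (intro selection_DCR[of r "E ` F"]) auto
  define sl where "sl q f = (SOME h. h \<in> H \<and> h q = f q)" for q :: real and f :: "real \<Rightarrow> real"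
  define I where "I = {(q, f). q \<in> \<rat> \<and> q \<in> {0..r} \<and> f \<in> F \<and> (\<exists>h\<in>H. h q = f q)}"
  define \<P> where "\<P> = (\<lambda>(q, f). graph_on {0..r} (sl q f)) ` I"
  have slH: "(q, f) \<in> I \<Longrightarrow> sl q f \<in> H \<and> sl q f q = f q" for q f
  proof -
    assume "(q, f) \<in> I"
    then have "\<exists>h. h \<in> H \<and> h q = f q" unfolding I_def by auto
    from someI_ex[OF this] show ?thesis unfolding sl_def .
  qed
  show ?thesis
  proof (intro exI conjI)
    have "I \<subseteq> \<rat> \<times> F" unfolding I_def by auto
    moreover have "countable (\<rat> \<times> F)" using Ffin countable_rat by (intro countable_SIGMA) (auto intro: countable_finite)
    ultimately have "countable I" by (rule countable_subset)
    then show "countable \<P>" unfolding \<P>_def by simp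
    show "\<forall>P\<in>\<P>. DC_graph P"
    proof
      fix P assume "P \<in> \<P>"
      then obtain q f where qf: "(q, f) \<in> I" "P = graph_on {0..r} (sl q f)" unfolding \<P>_def by auto
      have "DCR {0..r} (sl q f)" using dcr slH[OF qf(1)] by auto
      then show "DC_graph P" unfolding DC_graph_def using qf(2) r rot0
        by (intro exI[of _ 0] exI[of _ "sl q f"] exI[of _ 0] exI[of _ r]) auto
    qed
    show "S = \<Union>\<P>"
    proof
      show "\<Union>\<P> \<subseteq> S" unfolding \<P>_def SH using slH by fastforce
      show "S \<subseteq> \<Union>\<P>"
      proof
        fix p assume "p \<in> S"
        then obtain h x0 where h: "h \<in> H" "x0 \<in> {0..r}" "p = (x0, h x0)"
          unfolding SH graph_on_def by blast
        define y0 where "y0 = h x0"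
        have x0r: "0 \<le> x0" "x0 \<le> r" using h(2) by auto
        define D where "D = (\<lambda>f. \<bar>E f x0 - y0\<bar>) ` {f\<in>F. E f x0 \<noteq> y0}"
        define \<epsilon> where "\<epsilon> = (if D = {} then 1 else Min D / 3)"
        have Dfin: "finite D" unfolding D_def using Ffin by simp
        have Dpos: "\<forall>d\<in>D. d > 0" unfolding D_def by auto
        have eps: "\<epsilon> > 0"
        proof (cases "D = {}")
          case True then show ?thesis unfolding \<epsilon>_def by simp
        next
          case False then have "Min D \<in> D" using Dfin by (rule_tac Min_in) auto
          then show ?thesis using False Dpos unfolding \<epsilon>_def by auto
        qed
        have sep: "3 * \<epsilon> \<le> \<bar>E f x0 - y0\<bar>" if "f \<in> F" "E f x0 \<noteq> y0" for f
        proof -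
          have fD: "\<bar>E f x0 - y0\<bar> \<in> D" unfolding D_def using that by auto
          then have "D \<noteq> {}" by auto
          then have "\<epsilon> = Min D / 3" unfolding \<epsilon>_def by simp
          moreover have "Min D \<le> \<bar>E f x0 - y0\<bar>" using Dfin fD by (rule Min_le)
          ultimately show ?thesis by simp
        qed
        have "\<forall>\<^sub>F x in at x0. \<forall>f\<in>F. dist (E f x) (E f x0) < \<epsilon>"
        proof (rule eventually_ball_finite[OF Ffin], rule ballI)
          fix f assume "f \<in> F"
          then have "(E f \<longlongrightarrow> E f x0) (at x0)" using Econt by (simp add: continuous_on_def)
          then show "\<forall>\<^sub>F x in at x0. dist (E f x) (E f x0) < \<epsilon>" using eps by (rule tendstoD)
        qed
        then obtain \<delta>1 where d1: "\<delta>1 > 0" "\<forall>x. x \<noteq> x0 \<and> dist x x0 < \<delta>1 \<longrightarrow> (\<forall>f\<in>F. dist (E f x) (E f x0) < \<epsilon>)"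
          unfolding eventually_at by auto
        have "(h \<longlongrightarrow> y0) (at x0 within {0..r})" using Hc h(1,2) unfolding y0_def continuous_on_def by auto
        then have "\<forall>\<^sub>F x in at x0 within {0..r}. dist (h x) y0 < \<epsilon>" using eps by (rule tendstoD)
        then obtain \<delta>2 where d2: "\<delta>2 > 0" "\<forall>x\<in>{0..r}. x \<noteq> x0 \<and> dist x x0 < \<delta>2 \<longrightarrow> dist (h x) y0 < \<epsilon>"
          unfolding eventually_at by auto
        define \<delta> where "\<delta> = min \<delta>1 \<delta>2"
        have dpos: "\<delta> > 0" unfolding \<delta>_def using d1 d2 by auto
        obtain q where q: "q \<in> \<rat>" "q \<in> {0..r}" "q \<noteq> x0" "\<bar>q - x0\<bar> < \<delta>"
        proof (cases "x0 < r")
          case True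
          then have "x0 < min (x0 + \<delta>) r" using dpos by auto
          then obtain q where q1: "q \<in> \<rat>" "x0 < q" "q < min (x0 + \<delta>) r" using Rats_dense_in_real by blast
          have "q \<in> {0..r}" using q1 x0r by simp
          moreover have "\<bar>q - x0\<bar> < \<delta>" using q1 by simp
          ultimately show ?thesis using that q1 by blast
        next
          case False
          then have "max (x0 - \<delta>) 0 < x0" using dpos r x0r by auto
          then obtain q where q1: "q \<in> \<rat>" "max (x0 - \<delta>) 0 < q" "q < x0" using Rats_dense_in_real by blast
          have "q \<in> {0..r}" using q1 x0r by simp
          moreover have "\<bar>q - x0\<bar> < \<delta>" using q1 by simp
          ultimately show ?thesis using that q1 by blast
        qed
        have "dist q x0 < \<delta>2" using q(4) unfolding \<delta>_def dist_real_def by linarith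
        then have hq: "dist (h q) y0 < \<epsilon>" using d2(2) q(2,3) by blast
        obtain f where f: "f \<in> F" "h q = f q" using inS[OF graphS[OF h(1) q(2)]] by blast
        have qfI: "(q, f) \<in> I" unfolding I_def using q f h(1) by auto
        define h1 where "h1 = sl q f"
        have h1: "h1 \<in> H" "h1 q = h q" using slH[OF qfI] f unfolding h1_def by auto
        define J where "J = {min q x0 .. max q x0}"
        have J0r: "J \<subseteq> {0..r}" unfolding J_def using q x0r by auto
        have Jd: "dist x x0 < \<delta>1" if xJ: "x \<in> J" for x
        proof -
          have "\<bar>x - x0\<bar> \<le> \<bar>q - x0\<bar>"
          proof (cases "q \<le> x0")
            case True then have "J = {q..x0}" unfolding J_def by simp
            then have "q \<le> x" "x \<le> x0" using xJ by auto
            then show ?thesis by (smt (verit))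
          next
            case False then have "J = {x0..q}" unfolding J_def by simp
            then have "x0 \<le> x" "x \<le> q" using xJ by auto
            then show ?thesis by (smt (verit))
          qed
          moreover have "\<delta> \<le> \<delta>1" unfolding \<delta>_def by simp
          ultimately show ?thesis using q(4) unfolding dist_real_def by linarith
        qed
        have key: "\<bar>h1 x - y0\<bar> < \<epsilon> \<or> \<bar>h1 x - y0\<bar> > 2 * \<epsilon>" if xJ: "x \<in> J" for x
        proof -
          have x0r': "x \<in> {0..r}" using J0r xJ by blast
          obtain f' where f': "f' \<in> F" "h1 x = E f' x" using sel[OF h1(1) x0r'] by blast
          have dd: "dist (E f' x) (E f' x0) < \<epsilon>"
          proof (cases "x = x0")
            case True then show ?thesis using eps by simp
          next
            case False
            then have "\<forall>f\<in>F. dist (E f x) (E f x0) < \<epsilon>" using d1(2) Jd[OF xJ] by blast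
            then show ?thesis using f'(1) by blast
          qed
          show ?thesis
          proof (cases "E f' x0 = y0")
            case True then show ?thesis using dd f' by (simp add: dist_real_def)
          next
            case False
            then have "3 * \<epsilon> \<le> \<bar>E f' x0 - y0\<bar>" using sep f'(1) by blast
            moreover have "\<bar>E f' x - E f' x0\<bar> < \<epsilon>" using dd by (simp add: dist_real_def)
            ultimately show ?thesis using f'(2) eps by (smt (verit))
          qed
        qed
        have "continuous_on J h1" using continuous_on_subset[OF Hc[rule_format, OF h1(1)] J0r] .
        then have conn: "connected (h1 ` J)" using connected_continuous_image connected_Icc unfolding J_def by blast
        have qJ: "q \<in> J" and x0J: "x0 \<in> J" unfolding J_def by auto
        have close: "\<bar>h1 x0 - y0\<bar> < \<epsilon>"
        proof (rule ccontr)
          assume "\<not> ?thesis"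
          then have big: "\<bar>h1 x0 - y0\<bar> > 2 * \<epsilon>" using key[OF x0J] by linarith
          have hq': "\<bar>h1 q - y0\<bar> < \<epsilon>" using hq h1 by (simp add: dist_real_def)
          show False
          proof (cases "h1 x0 > y0")
            case True
            have "{h1 q .. h1 x0} \<subseteq> h1 ` J" using conn qJ x0J by (intro connected_contains_Icc) auto
            moreover have "y0 + 3/2 * \<epsilon> \<in> {h1 q .. h1 x0}" using True big hq' eps by (simp add: abs_if split: if_splits)
            ultimately obtain x where xJ: "x \<in> J" and hx: "h1 x = y0 + 3/2 * \<epsilon>" by auto
            have "\<bar>h1 x - y0\<bar> = 3/2 * \<epsilon>" using hx eps by simp
            then show False using key[OF xJ] eps by linarith
          next
            case False
            have "{h1 x0 .. h1 q} \<subseteq> h1 ` J" using conn qJ x0J by (intro connected_contains_Icc) auto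
            moreover have "y0 - 3/2 * \<epsilon> \<in> {h1 x0 .. h1 q}" using False big hq' eps by (simp add: abs_if split: if_splits)
            ultimately obtain x where xJ: "x \<in> J" and hx: "h1 x = y0 - 3/2 * \<epsilon>" by auto
            have "\<bar>h1 x - y0\<bar> = 3/2 * \<epsilon>" using hx eps by simp
            then show False using key[OF xJ] eps by linarith
          qed
        qed
        obtain f'' where f'': "f'' \<in> F" "h1 x0 = E f'' x0" using sel[OF h1(1) h(2)] by blast
        have "E f'' x0 = y0"
        proof (rule ccontr)
          assume "E f'' x0 \<noteq> y0"
          then have "3 * \<epsilon> \<le> \<bar>E f'' x0 - y0\<bar>" using sep f''(1) by blast
          then show False using close f'' eps by linarith
        qed
        then have "p \<in> graph_on {0..r} h1" unfolding graph_on_def using h f'' y0_def by auto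
        moreover have "graph_on {0..r} h1 \<in> \<P>" unfolding \<P>_def h1_def using qfI by (auto intro!: image_eqI[of _ _ "(q, f)"])
        ultimately show "p \<in> \<Union>\<P>" by blast
      qed
    qed
  qed
qed

end
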